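(* Let $(V,d,k,q)$ be an instance of the individually fair $k$-center with outliers problem (IF$k$CO) as defined in the context. Then the basic algorithm (Algorithm 2) described in the context outputs a feasible solution $(S,O,\sigma)$ for this instance, i.e. $|S|\le k$ and $|O|\le q$.
   Context: IF$k$CO instance: a finite set $V$ with $|V|=n$, a metric $d$ on $V$ (nonnegative, symmetric, $d_{ii}=0$, triangle inequality), and integers $k\ge 1$ and $q\ge 0$. For $i\in V$, $NR_q(i)$ is the distance from $i$ to its $\lceil (n-q)/k\rceil$-th nearest neighbor in $V$, where $i$ counts as its own (first) nearest neighbor. A solution is $(S,O,\sigma)$ with $S,O\subseteq V$ and $\sigma:V\setminus O\to S$; feasible if $|S|\le k$ and $|O|\le q$. Algorithm 2: set $P:=V$, $S:=\emptyset$. While $P\neq\emptyset$ and $|S|<k$: pick $s\in P$ minimizing $NR_q(i)$ over $i\in P$; set $S:=S\cup\{s\}$ and $P:=\{i\in P: d_{is}>2\,NR_q(i)\}$. Then set $O:=P$ and, for each $i\in V\setminus O$, let $\sigma(i)$ be a center $h\in S$ minimizing $d_{ih}$. Output $(S,O,\sigma)$. *)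

theory Defs
  imports Complex_Main "HOL-Library.Multiset"
begin

definition is_metric_on :: "'a set \<Rightarrow> ('a \<Rightarrow> 'a \<Rightarrow> real) \<Rightarrow> bool" where
  "is_metric_on V d \<longleftrightarrow>
     (\<forall>i\<in>V. \<forall>j\<in>V. d i j \<ge> 0) \<and>
     (\<forall>i\<in>V. \<forall>j\<in>V. d i j = d j i) \<and>
     (\<forall>i\<in>V. d i i = 0) \<and>
     (\<forall>i\<in>V. \<forall>j\<in>V. \<forall>l\<in>V. d i l \<le> d i j + d j l)"

definition nr_rank :: "'a set \<Rightarrow> nat \<Rightarrow> nat \<Rightarrow> nat" where
  "nr_rank V k q = nat \<lceil>(real (card V) - real q) / real k\<rceil>"

text \<open>NR_q(i): distance from i to its m-th nearest neighbour in V (i itself counts,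
  as it has distance 0); i.e. the m-th smallest element of the multiset of distances.
  (Convention: if m = 0, which only happens when q \<ge> n, the first entry is used.)\<close>
definition NR :: "'a set \<Rightarrow> ('a \<Rightarrow> 'a \<Rightarrow> real) \<Rightarrow> nat \<Rightarrow> nat \<Rightarrow> 'a \<Rightarrow> real" where
  "NR V d k q i =
     sorted_list_of_multiset (image_mset (d i) (mset_set V)) ! (nr_rank V k q - 1)"

definition alg2_step :: "'a set \<Rightarrow> ('a \<Rightarrow> 'a \<Rightarrow> real) \<Rightarrow> nat \<Rightarrow> nat \<Rightarrow>
    'a set \<times> 'a set \<Rightarrow> 'a set \<times> 'a set \<Rightarrow> bool" where
  "alg2_step V d k q st st' \<longleftrightarrow>
     (let P = fst st; S = snd st in
      P \<noteq> {} \<and> card S < k \<and>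
      (\<exists>s\<in>P. (\<forall>i\<in>P. NR V d k q s \<le> NR V d k q i) \<and>
             st' = ({i\<in>P. d i s > 2 * NR V d k q i}, insert s S)))"

text \<open>(S, O, sigma) is a possible output of Algorithm 2 (for some choice of tie-breaking).\<close>
definition alg2_output :: "'a set \<Rightarrow> ('a \<Rightarrow> 'a \<Rightarrow> real) \<Rightarrow> nat \<Rightarrow> nat \<Rightarrow>
    'a set \<Rightarrow> 'a set \<Rightarrow> ('a \<Rightarrow> 'a) \<Rightarrow> bool" where
  "alg2_output V d k q S Out \<sigma> \<longleftrightarrow>
     (\<exists>P. (alg2_step V d k q)\<^sup>*\<^sup>* (V, {}) (P, S) \<and>
          \<not> (P \<noteq> {} \<and> card S < k) \<and> Out = P) \<and>
     (\<forall>i\<in>V - Out. \<sigma> i \<in> S \<and> (\<forall>h\<in>S. d i (\<sigma> i) \<le> d i h))"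

end

theory Submission
  imports Defs
begin

lemma sorted_filter_le:
  fixes xs :: "real list"
  assumes "sorted xs" "1 \<le> m" "m \<le> length xs"
  shows "m \<le> length (filter (\<lambda>y. y \<le> xs ! (m - 1)) xs)"
proof -
  have tk: "filter (\<lambda>y. y \<le> xs ! (m - 1)) (take m xs) = take m xs"
  proof -
    have "\<forall>y\<in>set (take m xs). y \<le> xs ! (m - 1)"
    proof
    fix y assume "y \<in> set (take m xs)"
    then obtain i where "i < length (take m xs)" "y = take m xs ! i"
      by (metis in_set_conv_nth)
    then have "i < m" "y = xs ! i" using assms by auto
    then show "y \<le> xs ! (m - 1)" using assms sorted_nth_mono by fastforce
    qed
    then show ?thesis by (rule filter_True)
  qed
  have "length (filter (\<lambda>y. y \<le> xs ! (m - 1)) xs)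
      = length (filter (\<lambda>y. y \<le> xs ! (m - 1)) (take m xs))
        + length (filter (\<lambda>y. y \<le> xs ! (m - 1)) (drop m xs))"
    by (metis filter_append append_take_drop_id length_append)
  then show ?thesis using tk assms by simp
qed

lemma ball_card:
  fixes d :: "'a \<Rightarrow> 'a \<Rightarrow> real"
  assumes "finite V" "k \<ge> 1"
  shows "nr_rank V k q \<le> card {j\<in>V. d s j \<le> NR V d k q s}"
proof (cases "nr_rank V k q = 0")
  case True then show ?thesis by simp
next
  case False
  define m where "m = nr_rank V k q"
  define xs where "xs = sorted_list_of_multiset (image_mset (d s) (mset_set V))"
  have len: "length xs = card V" unfolding xs_def
    by (metis mset_sorted_list_of_multiset size_image_mset size_mset size_mset_set)
  have "m \<le> card V"
  proof -
    have "(real (card V) - real q) / real k \<le> real (card V)"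
    proof -
      have k1: "real k \<ge> 1" using assms(2) by simp
      have "real (card V) * 1 \<le> real (card V) * real k" using k1 by (intro mult_left_mono) auto
      then have "real (card V) - real q \<le> real (card V) * real k" by simp
      then show ?thesis using k1 by (simp add: pos_divide_le_eq)
    qed
    then have "\<lceil>(real (card V) - real q) / real k\<rceil> \<le> int (card V)"
      by (simp add: ceiling_le_iff)
    then show ?thesis unfolding m_def nr_rank_def using nat_le_iff by blast
  qed
  then have mle: "m \<le> length xs" using len by simp
  have "m \<le> length (filter (\<lambda>y. y \<le> xs ! (m - 1)) xs)"
    using sorted_filter_le[of xs m] mle False unfolding m_def xs_def by auto
  also have "length (filter (\<lambda>y. y \<le> xs ! (m - 1)) xs) = size (mset (filter (\<lambda>y. y \<le> xs ! (m - 1)) xs))"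
    by (rule size_mset[symmetric])
  also have "\<dots> = size (filter_mset (\<lambda>y. y \<le> xs ! (m - 1)) (image_mset (d s) (mset_set V)))"
    unfolding mset_filter xs_def by simp
  also have "\<dots> = card {j\<in>V. d s j \<le> xs ! (m - 1)}"
    using assms(1) by (simp add: filter_mset_image_mset filter_mset_mset_set)
  finally show ?thesis unfolding m_def xs_def NR_def by simp
qed

theorem lemma2:
  fixes V :: "'a set" and d :: "'a \<Rightarrow> 'a \<Rightarrow> real" and k q :: nat
    and S Out :: "'a set" and \<sigma> :: "'a \<Rightarrow> 'a"
  assumes "finite V"
    and "is_metric_on V d"
    and "k \<ge> 1"
    and "alg2_output V d k q S Out \<sigma>"
  shows "card S \<le> k \<and> card Out \<le> q"
proof -
  define N where "N = NR V d k q"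
  define I where "I = (\<lambda>(P::'a set, S::'a set). finite S \<and> S \<subseteq> V \<and> P \<subseteq> V \<and> card S \<le> k \<and>
     (\<forall>s\<in>S. \<forall>p\<in>P. d p s > 2 * N p) \<and> (\<forall>s\<in>S. \<forall>p\<in>P. N s \<le> N p) \<and>
     (\<forall>s\<in>S. \<forall>s'\<in>S. s \<noteq> s' \<longrightarrow> (\<forall>j\<in>V. \<not> (d j s \<le> N s \<and> d j s' \<le> N s'))))"
  have met: "\<And>i j. i \<in> V \<Longrightarrow> j \<in> V \<Longrightarrow> d i j = d j i"
    "\<And>i j l. i \<in> V \<Longrightarrow> j \<in> V \<Longrightarrow> l \<in> V \<Longrightarrow> d i l \<le> d i j + d j l"
    using assms(2) unfolding is_metric_on_def by auto
  obtain P where P: "(alg2_step V d k q)\<^sup>*\<^sup>* (V, {}) (P, S)" "\<not> (P \<noteq> {} \<and> card S < k)" "Out = P"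
    using assms(4) unfolding alg2_output_def by blast
  have inv: "I st" if "(alg2_step V d k q)\<^sup>*\<^sup>* (V, {}) st" for st
    using that
  proof (induction rule: rtranclp_induct)
    case base
    then show ?case unfolding I_def by simp
  next
    case (step y z)
    obtain P0 S0 where y: "y = (P0, S0)" by fastforce
    from step.hyps(2) obtain s where s: "s \<in> P0" "\<forall>i\<in>P0. N s \<le> N i"
      "z = ({i\<in>P0. d i s > 2 * N i}, insert s S0)" "card S0 < k"
      unfolding alg2_step_def y N_def by auto
    have Iy: "I (P0, S0)" using step.IH y by simp
    then have fin: "finite S0" "S0 \<subseteq> V" "P0 \<subseteq> V"
      and a: "\<forall>s\<in>S0. \<forall>p\<in>P0. d p s > 2 * N p" and b: "\<forall>s\<in>S0. \<forall>p\<in>P0. N s \<le> N p"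
      and c: "\<forall>s\<in>S0. \<forall>s'\<in>S0. s \<noteq> s' \<longrightarrow> (\<forall>j\<in>V. \<not> (d j s \<le> N s \<and> d j s' \<le> N s'))"
      unfolding I_def by auto
    have sV: "s \<in> V" using s fin by auto
    have c': "\<not> (d j s \<le> N s \<and> d j s' \<le> N s')" if "s' \<in> S0" "j \<in> V" for s' j
    proof
      assume h: "d j s \<le> N s \<and> d j s' \<le> N s'"
      have s'V: "s' \<in> V" using that fin by auto
      have "N s' \<le> N s" using b that s by auto
      have "d s s' \<le> d s j + d j s'" using met(2) sV s'V that by auto
      also have "\<dots> = d j s + d j s'" using met(1) sV that by auto
      finally have "d s s' \<le> 2 * N s" using h \<open>N s' \<le> N s\<close> by linarith
      moreover have "d s s' > 2 * N s" using a that s by auto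
      ultimately show False by linarith
    qed
    have "card (insert s S0) \<le> k" 
    proof -
      have "card (insert s S0) \<le> Suc (card S0)" using fin(1) by (simp add: card_insert_if)
      then show ?thesis using s(4) by linarith
    qed
    have a': "\<forall>t\<in>insert s S0. \<forall>p\<in>{i\<in>P0. d i s > 2 * N i}. d p t > 2 * N p"
      using a by auto
    have b': "\<forall>t\<in>insert s S0. \<forall>p\<in>{i\<in>P0. d i s > 2 * N i}. N t \<le> N p"
      using b s(2) by auto
    have c'': "\<forall>t\<in>insert s S0. \<forall>t'\<in>insert s S0. t \<noteq> t' \<longrightarrow> (\<forall>j\<in>V. \<not> (d j t \<le> N t \<and> d j t' \<le> N t'))"
      using c c' by blast
    show ?case unfolding s(3) I_def split using fin sV a' b' c'' \<open>card (insert s S0) \<le> k\<close>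
      by blast
  qed
  have IS: "I (P, S)" using inv P(1) .
  then have fin: "finite S" "S \<subseteq> V" "P \<subseteq> V" "card S \<le> k"
    and a: "\<forall>s\<in>S. \<forall>p\<in>P. d p s > 2 * N p" and b: "\<forall>s\<in>S. \<forall>p\<in>P. N s \<le> N p"
    and c: "\<forall>s\<in>S. \<forall>s'\<in>S. s \<noteq> s' \<longrightarrow> (\<forall>j\<in>V. \<not> (d j s \<le> N s \<and> d j s' \<le> N s'))"
    unfolding I_def by auto
  have "card Out \<le> q"
  proof (cases "P = {}")
    case True then show ?thesis using P by simp
  next
    case False
    then have cS: "card S = k" using P(2) fin by simp
    define B where "B = (\<lambda>s. {j\<in>V. d j s \<le> N s})"
    define m where "m = nr_rank V k q"
    have Bcard: "m \<le> card (B s)" if "s \<in> S" for s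
    proof -
      have "B s = {j\<in>V. d s j \<le> NR V d k q s}" unfolding B_def N_def
        using met(1) fin that by auto
      then show ?thesis using ball_card[OF assms(1) assms(3)] unfolding m_def by simp
    qed
    have disj: "\<forall>i\<in>S. \<forall>j\<in>S. i \<noteq> j \<longrightarrow> B i \<inter> B j = {}" unfolding B_def
      using c by blast
    have finB: "\<And>s. finite (B s)" unfolding B_def using assms(1) by simp
    have "card (\<Union>s\<in>S. B s) = (\<Sum>s\<in>S. card (B s))"
      using card_UN_disjoint[OF fin(1)] finB disj by auto
    also have "\<dots> \<ge> (\<Sum>s\<in>S. m)" using Bcard sum_mono[of S "\<lambda>_. m" "\<lambda>s. card (B s)"] by simp
    finally have U: "k * m \<le> card (\<Union>s\<in>S. B s)" using cS by simp
    have sub: "(\<Union>s\<in>S. B s) \<subseteq> V - Out"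
    proof
      fix j assume "j \<in> (\<Union>s\<in>S. B s)"
      then obtain s where sj: "s \<in> S" "j \<in> V" "d j s \<le> N s" unfolding B_def by auto
      show "j \<in> V - Out"
      proof (rule ccontr)
        assume "j \<notin> V - Out"
        then have "j \<in> P" using sj P(3) by auto
        then have "N s \<le> N j" "d j s > 2 * N j" using a b sj by auto
        moreover have "d j s \<ge> 0" using assms(2) sj fin unfolding is_metric_on_def by auto
        ultimately show False using sj by linarith
      qed
    qed
    have UV: "card (\<Union>s\<in>S. B s) \<le> card (V - Out)"
      using card_mono[OF _ sub] assms(1) by simp
    also have "\<dots> = card V - card Out" using P(3) fin assms(1)
      by (simp add: card_Diff_subset finite_subset)
    finally have UV2: "card (\<Union>s\<in>S. B s) \<le> card V - card Out" .
    have km: "k * m + card Out \<le> card V"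
    proof -
      have "card Out \<le> card V" using card_mono[OF assms(1)] P(3) fin(3) by simp
      then show ?thesis using U UV2 by linarith
    qed
    have "real (card V) - real q \<le> real k * real m"
    proof -
      have "(real (card V) - real q) / real k \<le> real m"
        unfolding m_def nr_rank_def by linarith
      then show ?thesis using assms(3) by (simp add: divide_le_eq mult.commute)
    qed
    then have "real (card V) \<le> real (k * m) + real q" by simp
    then show ?thesis using km by linarith
  qed
  then show ?thesis using fin by simp
qed

end
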